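(* Let $E=[n]$, let $f:2^E\to\mathbb{Z}_{\ge0}$ be a nonnegative integer-valued submodular function with $M:=\|f\|_\infty<\infty$, and let $d\in\mathbb{Z}^n$ be an integer direction with at least one positive entry. Let $\hat E=E\cup\{n+1\}$ and, for $C\in\mathbb{R}$, define $\hat f(\cdot;C):2^{\hat E}\to\mathbb{R}$ by \[ \hat f(S;C)=\begin{cases} f(S) & \text{if } n+1\notin S,\\ f(S\setminus\{n+1\})+C & \text{if } n+1\in S\subsetneq \hat E,\\ f(E) & \text{if } S=\hat E.\end{cases} \] Let $\hat d=(d_1,\dots,d_n,0)\in\mathbb{Z}^{n+1}$ and let $e_{n+1}$ be the $(n+1)$-st standard basis vector. If $C>M\|d\|_1$, then \[ \max\bigl\{\lambda_1:\ \lambda_1,\lambda_2\in\mathbb{R},\ \lambda_1\hat d+\lambda_2 e_{n+1}\in B(\hat f(\cdot;C))\bigr\} =\max\bigl\{\lambda\in\mathbb{R}:\ \lambda d\in P(f)\bigr\}. \]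
   Context: For a set function $g$ on a finite ground set $V$ and $x\in\mathbb{R}^V$, write $x(S)=\sum_{i\in S}x_i$. The extended polymatroid is $P(g)=\{x\in\mathbb{R}^V: x(S)\le g(S)\ \forall S\subseteq V\}$ and the base polytope is $B(g)=\{x\in P(g): x(V)=g(V)\}$. $\|d\|_1=\sum_i|d_i|$. *)

theory Defs
  imports Complex_Main
begin

text \<open>Vectors in R^V are functions nat => real; only values on V matter.\<close>

definition submodular_on :: "nat set \<Rightarrow> (nat set \<Rightarrow> int) \<Rightarrow> bool" where
  "submodular_on V f \<longleftrightarrow>
     (\<forall>S T. S \<subseteq> V \<longrightarrow> T \<subseteq> V \<longrightarrow> f (S \<union> T) + f (S \<inter> T) \<le> f S + f T)"

definition ext_polymatroid :: "nat set \<Rightarrow> (nat set \<Rightarrow> real) \<Rightarrow> (nat \<Rightarrow> real) set" where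
  "ext_polymatroid V g = {x. \<forall>S. S \<subseteq> V \<longrightarrow> (\<Sum>i\<in>S. x i) \<le> g S}"

definition base_polytope :: "nat set \<Rightarrow> (nat set \<Rightarrow> real) \<Rightarrow> (nat \<Rightarrow> real) set" where
  "base_polytope V g = {x \<in> ext_polymatroid V g. (\<Sum>i\<in>V. x i) = g V}"

definition f_hat :: "nat \<Rightarrow> (nat set \<Rightarrow> int) \<Rightarrow> real \<Rightarrow> nat set \<Rightarrow> real" where
  "f_hat n f C S =
     (if Suc n \<notin> S then real_of_int (f S)
      else if S = insert (Suc n) {1..n} then real_of_int (f {1..n})
      else real_of_int (f (S - {Suc n})) + C)"

definition d_hat :: "nat \<Rightarrow> (nat \<Rightarrow> int) \<Rightarrow> nat \<Rightarrow> real" where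
  "d_hat n d i = (if i \<in> {1..n} then real_of_int (d i) else 0)"

definition unit_vec :: "nat \<Rightarrow> nat \<Rightarrow> real" where
  "unit_vec j i = (if i = j then 1 else 0)"

definition has_max :: "real set \<Rightarrow> real \<Rightarrow> bool" where
  "has_max A m \<longleftrightarrow> m \<in> A \<and> (\<forall>x\<in>A. x \<le> m)"

end

theory Submission
  imports Defs
begin

lemma sum_vec_sub:
  assumes "S \<subseteq> {1..n}"
  shows "(\<Sum>i\<in>S. l1 * d_hat n d i + l2 * unit_vec (Suc n) i) = l1 * (\<Sum>i\<in>S. real_of_int (d i))"
proof -
  have "(\<Sum>i\<in>S. l1 * d_hat n d i + l2 * unit_vec (Suc n) i) = (\<Sum>i\<in>S. l1 * real_of_int (d i))"
    by (rule sum.cong) (use assms in \<open>auto simp: d_hat_def unit_vec_def\<close>)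
  thus ?thesis by (simp add: sum_distrib_left)
qed

lemma sum_vec_ins:
  assumes "S \<subseteq> insert (Suc n) {1..n}" "Suc n \<in> S"
  shows "(\<Sum>i\<in>S. l1 * d_hat n d i + l2 * unit_vec (Suc n) i)
     = l1 * (\<Sum>i\<in>S - {Suc n}. real_of_int (d i)) + l2"
proof -
  have fin: "finite S" using assms(1) finite_subset by blast
  have "(\<Sum>i\<in>S. l1 * d_hat n d i + l2 * unit_vec (Suc n) i)
     = (l1 * d_hat n d (Suc n) + l2 * unit_vec (Suc n) (Suc n)) +
       (\<Sum>i\<in>S - {Suc n}. l1 * d_hat n d i + l2 * unit_vec (Suc n) i)"
    using sum.remove[OF fin assms(2)] by blast
  also have "(\<Sum>i\<in>S - {Suc n}. l1 * d_hat n d i + l2 * unit_vec (Suc n) i)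
      = l1 * (\<Sum>i\<in>S - {Suc n}. real_of_int (d i))"
    by (rule sum_vec_sub) (use assms in auto)
  finally show ?thesis by (simp add: d_hat_def unit_vec_def)
qed

theorem lemma3:
  fixes n :: nat and f :: "nat set \<Rightarrow> int" and d :: "nat \<Rightarrow> int" and C :: real
  assumes nonneg: "\<forall>S. S \<subseteq> {1..n} \<longrightarrow> f S \<ge> 0"
    and submod: "submodular_on {1..n} f"
    and pos: "\<exists>i\<in>{1..n}. d i > 0"
    and C: "C > real_of_int (Max (f ` Pow {1..n})) * real_of_int (\<Sum>i\<in>{1..n}. \<bar>d i\<bar>)"
  shows "\<exists>m. has_max {l1. \<exists>l2. (\<lambda>i. l1 * d_hat n d i + l2 * unit_vec (Suc n) i)
                        \<in> base_polytope (insert (Suc n) {1..n}) (f_hat n f C)} m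
           \<and> has_max {l. (\<lambda>i. l * real_of_int (d i)) \<in> ext_polymatroid {1..n} (\<lambda>S. real_of_int (f S))} m"
proof -
  define E where "E = {1..n::nat}"
  define D where "D S = (\<Sum>i\<in>S. real_of_int (d i))" for S
  define Q where "Q = {S. S \<subseteq> E \<and> D S > 0}"
  define m where "m = Min ((\<lambda>S. real_of_int (f S) / D S) ` Q)"
  define M where "M = real_of_int (Max (f ` Pow E))"
  define N where "N = (\<Sum>i\<in>E. \<bar>real_of_int (d i)\<bar>)"
  obtain i where i: "i \<in> E" "d i > 0" using pos E_def by auto
  have di: "real_of_int (d i) \<ge> 1" using i by simp
  have finE: "finite E" by (simp add: E_def)
  have finQ: "finite Q" using finE unfolding Q_def by (simp add: finite_subset[of _ "Pow E"] subset_iff)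
  have iQ: "{i} \<in> Q" using i by (simp add: Q_def D_def)
  have fnn: "S \<subseteq> E \<Longrightarrow> real_of_int (f S) \<ge> 0" for S using nonneg E_def by auto
  have fM: "S \<subseteq> E \<Longrightarrow> real_of_int (f S) \<le> M" for S
    unfolding M_def using finE by (simp add: Max_ge)
  have m_le: "S \<in> Q \<Longrightarrow> m \<le> real_of_int (f S) / D S" for S
    unfolding m_def using finQ by simp
  have m_mem: "m \<in> (\<lambda>S. real_of_int (f S) / D S) ` Q"
    unfolding m_def using finQ iQ by (intro Min_in) auto
  have m_nn: "m \<ge> 0" using m_mem fnn unfolding Q_def by auto
  have mS: "S \<subseteq> E \<Longrightarrow> m * D S \<le> real_of_int (f S)" for S
  proof -
    assume S: "S \<subseteq> E"
    show ?thesis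
    proof (cases "D S > 0")
      case True
      hence "m \<le> real_of_int (f S) / D S" using m_le S Q_def by auto
      thus ?thesis using True by (simp add: pos_le_divide_eq)
    next
      case False
      hence "m * D S \<le> 0" using m_nn by (simp add: mult_nonneg_nonpos)
      thus ?thesis using fnn[OF S] by linarith
    qed
  qed
  have A_le: "l * D S \<le> real_of_int (f S) \<Longrightarrow> S \<in> Q \<Longrightarrow> l \<le> real_of_int (f S) / D S" for l S
    unfolding Q_def by (simp add: pos_le_divide_eq)
  have A_bound: "(\<forall>S. S \<subseteq> E \<longrightarrow> l * D S \<le> real_of_int (f S)) \<Longrightarrow> l \<le> m" for l
  proof -
    assume h: "\<forall>S. S \<subseteq> E \<longrightarrow> l * D S \<le> real_of_int (f S)"
    from m_mem obtain S where "S \<in> Q" "m = real_of_int (f S) / D S" by auto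
    thus ?thesis using A_le h Q_def by auto
  qed
  have mM: "m \<le> M"
  proof -
    have "m \<le> real_of_int (f {i}) / D {i}" using m_le iQ by blast
    also have "\<dots> \<le> real_of_int (f {i})"
      using di fnn[of "{i}"] i by (simp add: D_def divide_le_eq mult_le_cancel_left1)
    also have "\<dots> \<le> M" using fM i by simp
    finally show ?thesis .
  qed
  have Ndi: "N \<ge> real_of_int (d i)"
    unfolding N_def using member_le_sum[of i E "\<lambda>j. \<bar>real_of_int (d j)\<bar>"] finE i by simp
  have DE: "D E = real_of_int (d i) + D (E - {i})"
    unfolding D_def using sum.remove[OF finE i(1)] by simp
  have NE: "N = real_of_int (d i) + (\<Sum>j\<in>E - {i}. \<bar>real_of_int (d j)\<bar>)"
    unfolding N_def using sum.remove[OF finE i(1), of "\<lambda>j. \<bar>real_of_int (d j)\<bar>"] i by simp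
  have negD: "- D (E - {i}) \<le> (\<Sum>j\<in>E - {i}. \<bar>real_of_int (d j)\<bar>)"
    unfolding D_def by (simp add: sum_negf[symmetric] sum_mono)
  have key: "real_of_int (f E) - m * D E \<le> M * N"
  proof -
    have a: "- m * D (E - {i}) \<le> m * (N - real_of_int (d i))"
      using mult_left_mono[OF negD m_nn] NE by simp
    have b: "real_of_int (f E) \<le> M" using fM by simp
    have c1: "(M - m) * (N - real_of_int (d i)) \<ge> 0" using mM Ndi by simp
    have c2: "M * (real_of_int (d i) - 1) \<ge> 0" using di fM[of "{}"] fnn[of "{}"] by simp
    have c3: "m * real_of_int (d i) \<ge> 0" using m_nn di by simp
    have "real_of_int (f E) - m * D E = real_of_int (f E) - m * real_of_int (d i) - m * D (E - {i})"
      using DE by (simp add: algebra_simps)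
    also have "\<dots> \<le> M - m * real_of_int (d i) + m * (N - real_of_int (d i))" using a b by simp
    also have "\<dots> \<le> M * N" using c1 c2 c3 by (simp add: algebra_simps)
    finally show ?thesis .
  qed
  have NN: "N = real_of_int (\<Sum>i\<in>{1..n}. \<bar>d i\<bar>)" by (simp add: N_def E_def)
  have MM: "M = real_of_int (Max (f ` Pow {1..n}))" by (simp add: M_def E_def)
  have keyC: "real_of_int (f E) - m * D E \<le> C" using key C NN MM by simp
  define l2 where "l2 = real_of_int (f E) - m * D E"
  show ?thesis
  proof (intro exI conjI)
    show "has_max {l. (\<lambda>i. l * real_of_int (d i)) \<in> ext_polymatroid {1..n} (\<lambda>S. real_of_int (f S))} m"
      unfolding has_max_def ext_polymatroid_def
      using mS A_bound by (auto simp: E_def D_def sum_distrib_left)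
    show "has_max {l1. \<exists>l2. (\<lambda>i. l1 * d_hat n d i + l2 * unit_vec (Suc n) i)
                        \<in> base_polytope (insert (Suc n) {1..n}) (f_hat n f C)} m"
      unfolding has_max_def
    proof (intro conjI ballI)
      show "m \<in> {l1. \<exists>l2. (\<lambda>i. l1 * d_hat n d i + l2 * unit_vec (Suc n) i)
                        \<in> base_polytope (insert (Suc n) {1..n}) (f_hat n f C)}"
      proof (intro CollectI exI[of _ l2])
        have all: "(\<Sum>i\<in>insert (Suc n) E. m * d_hat n d i + l2 * unit_vec (Suc n) i) = real_of_int (f E)"
          using sum_vec_ins[of "insert (Suc n) E" n m d l2] by (simp add: E_def l2_def D_def)
        have sub: "(\<Sum>i\<in>S. m * d_hat n d i + l2 * unit_vec (Suc n) i) \<le> f_hat n f C S"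
          if S: "S \<subseteq> insert (Suc n) E" for S
        proof (cases "Suc n \<in> S")
          case False
          hence SE: "S \<subseteq> E" using S by auto
          show ?thesis using sum_vec_sub[of S n m d l2] SE mS[OF SE] False
            by (simp add: E_def D_def f_hat_def)
        next
          case True
          show ?thesis
          proof (cases "S = insert (Suc n) E")
            case True2: True
            show ?thesis using all True2 by (simp add: f_hat_def E_def)
          next
            case False2: False
            have TE: "S - {Suc n} \<subseteq> E" using S by auto
            have "(\<Sum>i\<in>S. m * d_hat n d i + l2 * unit_vec (Suc n) i) = m * D (S - {Suc n}) + l2"
              using sum_vec_ins[of S n m d l2] S True by (simp add: E_def D_def)
            also have "\<dots> \<le> real_of_int (f (S - {Suc n})) + C"
              using mS[OF TE] keyC l2_def by simp
            finally show ?thesis using True False2 by (simp add: f_hat_def E_def)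
          qed
        qed
        show "(\<lambda>i. m * d_hat n d i + l2 * unit_vec (Suc n) i) \<in> base_polytope (insert (Suc n) {1..n}) (f_hat n f C)"
          unfolding base_polytope_def ext_polymatroid_def
          using sub all by (auto simp: E_def f_hat_def)
      qed
    next
      fix l1 assume "l1 \<in> {l1. \<exists>l2. (\<lambda>i. l1 * d_hat n d i + l2 * unit_vec (Suc n) i)
                        \<in> base_polytope (insert (Suc n) {1..n}) (f_hat n f C)}"
      then obtain l2' where h: "\<forall>S. S \<subseteq> insert (Suc n) E \<longrightarrow>
          (\<Sum>i\<in>S. l1 * d_hat n d i + l2' * unit_vec (Suc n) i) \<le> f_hat n f C S"
        unfolding base_polytope_def ext_polymatroid_def E_def by auto
      have "\<forall>S. S \<subseteq> E \<longrightarrow> l1 * D S \<le> real_of_int (f S)"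
      proof (intro allI impI)
        fix S assume SE: "S \<subseteq> E"
        have "Suc n \<notin> S" using SE E_def by auto
        thus "l1 * D S \<le> real_of_int (f S)"
          using h[rule_format, of S] SE sum_vec_sub[of S n l1 d l2']
          by (auto simp: E_def D_def f_hat_def)
      qed
      thus "l1 \<le> m" by (rule A_bound)
    qed
  qed
qed

end
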